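(* Every finite simple undirected graph is isomorphic to an induced subgraph of a finite simple undirected graph whose automorphism group acts primitively on its vertex set.
   Context: A permutation group is primitive if it is transitive and preserves no equivalence relation other than equality and the universal relation. *)

theory Defs
  imports Main
begin

definition simple_graph :: "'a set \<Rightarrow> ('a \<Rightarrow> 'a \<Rightarrow> bool) \<Rightarrow> bool" where
  "simple_graph V E \<longleftrightarrow> finite V \<and>
     (\<forall>x y. E x y \<longrightarrow> x \<in> V \<and> y \<in> V \<and> x \<noteq> y \<and> E y x)"

definition iso_induced_subgraph ::
  "'a set \<Rightarrow> ('a \<Rightarrow> 'a \<Rightarrow> bool) \<Rightarrow> 'b set \<Rightarrow> ('b \<Rightarrow> 'b \<Rightarrow> bool) \<Rightarrow> bool" where
  "iso_induced_subgraph V E W F \<longleftrightarrow>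
     (\<exists>f. inj_on f V \<and> f ` V \<subseteq> W \<and> (\<forall>x\<in>V. \<forall>y\<in>V. E x y \<longleftrightarrow> F (f x) (f y)))"

definition graph_aut :: "'b set \<Rightarrow> ('b \<Rightarrow> 'b \<Rightarrow> bool) \<Rightarrow> ('b \<Rightarrow> 'b) set" where
  "graph_aut W F = {\<sigma>. bij_betw \<sigma> W W \<and> (\<forall>x\<in>W. \<forall>y\<in>W. F x y \<longleftrightarrow> F (\<sigma> x) (\<sigma> y))}"

definition primitive_on :: "('b \<Rightarrow> 'b) set \<Rightarrow> 'b set \<Rightarrow> bool" where
  "primitive_on G W \<longleftrightarrow>
     W \<noteq> {} \<and> (\<forall>x\<in>W. \<forall>y\<in>W. \<exists>\<sigma>\<in>G. \<sigma> x = y) \<and>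
     (\<forall>R. equiv W R \<and> (\<forall>\<sigma>\<in>G. \<forall>(x, y)\<in>R. (\<sigma> x, \<sigma> y) \<in> R)
          \<longrightarrow> R = Id_on W \<or> R = W \<times> W)"

end

theory Submission imports Defs "HOL-Number_Theory.Number_Theory" begin

lemma pow2_sum_eq:
  fixes a b c d :: nat
  shows "2^a + 2^b = (2::nat)^c + 2^d \<Longrightarrow> (a = c \<and> b = d) \<or> (a = d \<and> b = c)"
proof (induction "a+b+c+d" arbitrary: a b c d rule: less_induct)
  case less
  show ?case
  proof (cases "a > 0 \<and> b > 0 \<and> c > 0 \<and> d > 0")
    case True
    then obtain a' b' c' d' where s: "a = Suc a'" "b = Suc b'" "c = Suc c'" "d = Suc d'"
      by (meson gr0_implies_Suc)
    from less.prems have "2^a' + 2^b' = (2::nat)^c' + 2^d'" by (simp add: s)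
    with less.hyps[of a' b' c' d'] s show ?thesis by auto
  next
    case False
    have odd: "odd ((2::nat)^x + 2^y) \<longleftrightarrow> (x = 0) \<noteq> (y = 0)" for x y :: nat
      by (cases x; cases y; simp)
    have two: "(2::nat)^x + 2^y = 2 \<longleftrightarrow> x = 0 \<and> y = 0" for x y :: nat
    proof
      assume h: "(2::nat)^x + 2^y = 2"
      show "x = 0 \<and> y = 0"
      proof (rule ccontr)
        assume "\<not> (x = 0 \<and> y = 0)"
        have ge: "z > 0 \<Longrightarrow> (2::nat)^z \<ge> 2" for z :: nat by (cases z) auto
        then have "(2::nat)^x \<ge> 2 \<or> (2::nat)^y \<ge> 2" using \<open>\<not> (x = 0 \<and> y = 0)\<close> by blast
        moreover have "(2::nat)^x \<ge> 1" "(2::nat)^y \<ge> 1" by simp_all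
        ultimately show False using h by linarith
      qed
    qed simp
    show ?thesis
    proof (cases "a = 0 \<and> b = 0")
      case True
      with less.prems two[of c d] show ?thesis by simp
    next
      case ab: False
      show ?thesis
      proof (cases "c = 0 \<and> d = 0")
        case True
        with less.prems two[of a b] show ?thesis by simp
      next
        case cd: False
        from False ab cd have "(a = 0) \<noteq> (b = 0) \<or> (c = 0) \<noteq> (d = 0)" by auto
        then have "(a = 0) \<noteq> (b = 0) \<and> (c = 0) \<noteq> (d = 0)"
          using odd[of a b] odd[of c d] less.prems by (metis (no_types))
        then consider "a = 0" "b \<noteq> 0" "c = 0" "d \<noteq> 0" | "a = 0" "b \<noteq> 0" "d = 0" "c \<noteq> 0"
          | "b = 0" "a \<noteq> 0" "c = 0" "d \<noteq> 0" | "b = 0" "a \<noteq> 0" "d = 0" "c \<noteq> 0" by auto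
        then show ?thesis
        proof cases
          case 1 then have "(2::nat)^b = 2^d" using less.prems by simp
          then show ?thesis using 1 by simp
        next
          case 2 then have "(2::nat)^b = 2^c" using less.prems by simp
          then show ?thesis using 2 by simp
        next
          case 3 then have "(2::nat)^a = 2^d" using less.prems by simp
          then show ?thesis using 3 by simp
        next
          case 4 then have "(2::nat)^a = 2^c" using less.prems by simp
          then show ?thesis using 4 by simp
        qed
      qed
    qed
  qed
qed

theorem proposition9:
  fixes V :: "'a set" and E :: "'a \<Rightarrow> 'a \<Rightarrow> bool"
  assumes "simple_graph V E"
  shows "\<exists>(W :: nat set) F. simple_graph W F \<and> primitive_on (graph_aut W F) W \<and>
           iso_induced_subgraph V E W F"
proof -
  have finV: "finite V" and Ep: "\<And>x y. E x y \<Longrightarrow> x \<in> V \<and> y \<in> V \<and> x \<noteq> y \<and> E y x"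
    using assms unfolding simple_graph_def by auto
  define n where "n = card V"
  obtain h where h: "bij_betw h V {0..<n}" using ex_bij_betw_finite_nat[OF finV] n_def by blast
  obtain p :: nat where p: "prime p" "2^(n+1) < p" using bigger_prime by blast
  define a where "a i = (2::nat)^(h i)" for i
  have ha: "a i < 2^n" if "i \<in> V" for i
    using h that unfolding a_def bij_betw_def by auto
  have pn: "(2::nat)^n + 2^n < p" using p(2) by simp
  have ap: "a i < p" if "i \<in> V" for i using ha[OF that] pn by linarith
  have p0: "p > 0" using p(1) prime_gt_0_nat by blast
  define W where "W = {0..<p}"
  define F where "F x y \<longleftrightarrow> x < p \<and> y < p \<and> x \<noteq> y \<and>
     (\<exists>i\<in>V. \<exists>j\<in>V. E i j \<and> (x + a j) mod p = (y + a i) mod p)" for x y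
  define \<sigma> where "\<sigma> c x = (x + c) mod p" for c x
  have sg: "simple_graph W F"
  proof -
    have "F x y \<longrightarrow> x \<in> W \<and> y \<in> W \<and> x \<noteq> y \<and> F y x" for x y
    proof
    assume Fxy: "F x y"
    then obtain i j where ij: "i \<in> V" "j \<in> V" "E i j" "(x + a j) mod p = (y + a i) mod p"
      "x < p" "y < p" "x \<noteq> y" unfolding F_def by blast
    have "F y x" unfolding F_def using ij Ep[OF ij(3)] by metis
    then show "x \<in> W \<and> y \<in> W \<and> x \<noteq> y \<and> F y x" using ij W_def by simp
    qed
    then show ?thesis unfolding simple_graph_def W_def by simp
  qed
  have aut: "\<sigma> c \<in> graph_aut W F" for c
  proof -
    have inj: "inj_on (\<sigma> c) W"
    proof (rule inj_onI)
      fix x y assume "x \<in> W" "y \<in> W" "\<sigma> c x = \<sigma> c y"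
      then have "[x + c = y + c] (mod p)" "x < p" "y < p" unfolding \<sigma>_def W_def cong_def by auto
      then have "[x = y] (mod p)" using cong_add_rcancel_nat by blast
      then show "x = y" using \<open>x < p\<close> \<open>y < p\<close> by (simp add: cong_def)
    qed
    have into: "\<sigma> c ` W \<subseteq> W" unfolding \<sigma>_def W_def using p0 by auto
    have bij: "bij_betw (\<sigma> c) W W"
    proof -
      have "card (\<sigma> c ` W) = card W" using card_image[OF inj] .
      then have "\<sigma> c ` W = W" using card_subset_eq[OF _ into] W_def by simp
      then show ?thesis unfolding bij_betw_def using inj by simp
    qed
    have "F x y \<longleftrightarrow> F (\<sigma> c x) (\<sigma> c y)" if "x \<in> W" "y \<in> W" for x y
    proof -
      have xy: "x \<noteq> y \<longleftrightarrow> \<sigma> c x \<noteq> \<sigma> c y" using inj that by (metis inj_onD)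
      have eqv: "(x + a j) mod p = (y + a i) mod p \<longleftrightarrow> (\<sigma> c x + a j) mod p = (\<sigma> c y + a i) mod p" for i j
      proof -
        have "(\<sigma> c x + a j) mod p = ((x + a j) + c) mod p" unfolding \<sigma>_def mod_add_left_eq
          by (simp add: ac_simps)
        moreover have "(\<sigma> c y + a i) mod p = ((y + a i) + c) mod p" unfolding \<sigma>_def mod_add_left_eq
          by (simp add: ac_simps)
        moreover have "((x + a j) + c) mod p = ((y + a i) + c) mod p \<longleftrightarrow> (x + a j) mod p = (y + a i) mod p"
          using cong_add_rcancel_nat[of "x + a j" c "y + a i" p] unfolding cong_def .
        ultimately show ?thesis by simp
      qed
      have lt: "\<sigma> c x < p" "\<sigma> c y < p" unfolding \<sigma>_def using p0 by auto
      have xyp: "x < p" "y < p" using that W_def by auto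
      show ?thesis unfolding F_def eqv using lt xyp xy by simp
    qed
    then show ?thesis unfolding graph_aut_def using bij by blast
  qed
  have prim: "primitive_on (graph_aut W F) W"
    unfolding primitive_on_def
  proof (intro conjI ballI allI impI)
    show "W \<noteq> {}" unfolding W_def using p0 by auto
  next
    fix x y assume "x \<in> W" "y \<in> W"
    then have "\<sigma> (y + p - x) x = y" unfolding \<sigma>_def W_def by auto
    then show "\<exists>s\<in>graph_aut W F. s x = y" using aut by blast
  next
    fix R assume R: "equiv W R \<and> (\<forall>s\<in>graph_aut W F. \<forall>(x, y)\<in>R. (s x, s y) \<in> R)"
    then have eq: "equiv W R" and inv: "\<And>c x y. (x, y) \<in> R \<Longrightarrow> (\<sigma> c x, \<sigma> c y) \<in> R"
      using aut by auto
    have RW: "R \<subseteq> W \<times> W" using eq unfolding equiv_def refl_on_def by auto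
    have refl: "\<And>z. z \<in> W \<Longrightarrow> (z, z) \<in> R" using eq unfolding equiv_def refl_on_def by auto
    have tr: "\<And>x y z. (x, y) \<in> R \<Longrightarrow> (y, z) \<in> R \<Longrightarrow> (x, z) \<in> R"
      using eq unfolding equiv_def trans_def by blast
    show "R = Id_on W \<or> R = W \<times> W"
    proof (cases "R \<subseteq> Id_on W")
      case True
      then show ?thesis using refl by auto
    next
      case False
      then obtain x y where xy: "(x, y) \<in> R" "x \<noteq> y" using RW by auto
      then have xW: "x < p" "y < p" using RW W_def by auto
      define d where "d = (y + p - x) mod p"
      have step: "(w, (w + d) mod p) \<in> R" if "w < p" for w
      proof -
        have "\<sigma> (w + p - x) x = w" unfolding \<sigma>_def using that xW by auto
        moreover have "\<sigma> (w + p - x) y = (w + d) mod p" unfolding \<sigma>_def d_def using xW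
          by (simp add: mod_add_right_eq add.commute add.left_commute)
        ultimately show ?thesis using inv[OF xy(1), of "w + p - x"] by simp
      qed
      have chain: "(z, (z + k * d) mod p) \<in> R" if "z < p" for k z
      proof (induction k)
        case 0 then show ?case using refl that W_def by simp
      next
        case (Suc k)
        have "((z + k * d) mod p, ((z + k * d) mod p + d) mod p) \<in> R" using step p0 by simp
        moreover have "((z + k * d) mod p + d) mod p = (z + Suc k * d) mod p"
          unfolding mod_add_left_eq by (simp add: algebra_simps)
        ultimately show ?case using Suc tr by metis
      qed
      have d0: "d \<noteq> 0" "d < p"
      proof -
        show "d < p" unfolding d_def using p0 by simp
        show "d \<noteq> 0"
        proof
          assume "d = 0"
          then obtain k where k: "y + p - x = p * k" unfolding d_def by (auto simp: mod_eq_0_iff_dvd)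
          consider "k = 0" | "k = 1" | "k \<ge> 2" by linarith
          then show False
          proof cases
            case 1 then show False using k xW by simp
          next
            case 2 then show False using k xW xy by simp
          next
            case 3 then have "p * k \<ge> p * 2" by simp
            then show False using k xW by linarith
          qed
        qed
      qed
      have "coprime d p"
        using p(1) d0 by (metis coprime_commute prime_imp_coprime_nat nat_dvd_not_less neq0_conv)
      then obtain e where e: "[d * e = 1] (mod p)" using cong_solve_coprime_nat by auto
      have "(u, v) \<in> R" if "u < p" "v < p" for u v
      proof -
        have "[u + (e * (v + p - u)) * d = u + (d * e) * (v + p - u)] (mod p)"
          by (simp add: algebra_simps)
        also have "[u + (d * e) * (v + p - u) = u + 1 * (v + p - u)] (mod p)"
          by (intro cong_add cong_mult e cong_refl)
        also have "u + 1 * (v + p - u) = v + p" using that by simp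
        also have "[v + p = v] (mod p)" by (simp add: cong_def)
        finally have "(u + (e * (v + p - u)) * d) mod p = v" using that by (simp add: cong_def)
        then show ?thesis using chain[OF that(1), of "e * (v + p - u)"] by simp
      qed
      then have "W \<times> W \<subseteq> R" unfolding W_def by auto
      then show ?thesis using RW by auto
    qed
  qed
  have iso: "iso_induced_subgraph V E W F"
    unfolding iso_induced_subgraph_def
  proof (intro exI conjI ballI)
    have hinj: "inj_on h V" using h bij_betw_def by blast
    show "inj_on a V" unfolding a_def using hinj by (auto simp: inj_on_def)
    show "a ` V \<subseteq> W" using ap W_def by auto
    fix i j assume ij: "i \<in> V" "j \<in> V"
    show "E i j \<longleftrightarrow> F (a i) (a j)"
    proof
      assume "E i j"
      then have "i \<noteq> j" using Ep by blast
      then have "a i \<noteq> a j" using hinj ij unfolding a_def by (auto simp: inj_on_def)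
      moreover have "(a i + a j) mod p = (a j + a i) mod p" by (simp add: add.commute)
      ultimately show "F (a i) (a j)" unfolding F_def using ap ij \<open>E i j\<close> by blast
    next
      assume "F (a i) (a j)"
      then obtain i' j' where i'j': "i' \<in> V" "j' \<in> V" "E i' j'" "a i \<noteq> a j"
        "(a i + a j') mod p = (a j + a i') mod p" unfolding F_def by blast
      have "a i + a j' < p" "a j + a i' < p" using ha ij i'j'(1,2) pn by (meson add_strict_mono less_trans)+
      then have "a i + a j' = a j + a i'" using i'j'(5) by simp
      then have "(h i = h j \<and> h j' = h i') \<or> (h i = h i' \<and> h j' = h j)"
        using pow2_sum_eq unfolding a_def by blast
      then have "h i = h i'" "h j' = h j" using i'j'(4) unfolding a_def by auto
      then have "i = i'" "j = j'" using hinj ij i'j' by (auto dest: inj_onD)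
      then show "E i j" using i'j' by simp
    qed
  qed
  show ?thesis using sg prim iso by blast
qed
end
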